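(* Let $k$ be a difference field of characteristic $0$, $R=k\{y_1,\ldots,y_n\}$, $S\subseteq\mathbb{N}[x]^n$, and $I=\{\mathbf{y}^{\mathbf{u}}:\mathbf{u}\in S\}$ the perfect closure of these monomials. Then there exist $\mathbf{b}_1,\ldots,\mathbf{b}_s\in\{0,1\}^n$ such that \[I=\mathfrak{p}^{\mathbf{b}_1}\cap\cdots\cap\mathfrak{p}^{\mathbf{b}_s}.\] Moreover, if such a decomposition is irredundant, then it is unique.
   Context: A difference field is a field $k$ with a ring endomorphism $\sigma$. $R=k\{y_1,\ldots,y_n\}$ is the polynomial ring over $k$ in the variables $\sigma^j(y_i)$ ($1\le i\le n$, $j\ge0$), with $\sigma$ extended naturally. For $p=\sum_i c_ix^i\in\mathbb{N}[x]$ and $a\in R$, $a^p=\prod_i(\sigma^i(a))^{c_i}$; $\mathbf{y}^{\mathbf{u}}=y_1^{u_1}\cdots y_n^{u_n}$ for $\mathbf{u}\in\mathbb{N}[x]^n$. A $\sigma$-ideal is an ideal stable under $\sigma$; it is perfect if $a^g\in I$ implies $a\in I$ for all $a\in R$ and all nonzero $g\in\mathbb{N}[x]$. For $F\subseteq R$, $\{F\}$ denotes the smallest perfect $\sigma$-ideal containing $F$. For $\mathbf{b}\in\{0,1\}^n$, $\mathfrak{p}^{\mathbf{b}}$ is the $\sigma$-ideal generated by $\{y_i: b_i\neq0\}$. *)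

theory Defs
  imports "HOL-Library.Poly_Mapping" "HOL-Computational_Algebra.Polynomial"
begin

text \<open>Difference polynomial ring k{y_1,...,y_n}: the variables are indexed by
  'n (a finite type with n elements) and sigma^j(y_i) is the variable (i,j).\<close>

type_synonym ('n, 'k) dpoly = "(('n \<times> nat) \<Rightarrow>\<^sub>0 nat) \<Rightarrow>\<^sub>0 'k"

definition ring_endo :: "('k::field \<Rightarrow> 'k) \<Rightarrow> bool" where
  "ring_endo s \<longleftrightarrow> s 1 = 1 \<and> (\<forall>a b. s (a + b) = s a + s b) \<and> (\<forall>a b. s (a * b) = s a * s b)"

definition mon_shift :: "(('n \<times> nat) \<Rightarrow>\<^sub>0 nat) \<Rightarrow> (('n \<times> nat) \<Rightarrow>\<^sub>0 nat)" where
  "mon_shift m = (\<Sum>v\<in>Poly_Mapping.keys m. Poly_Mapping.single (fst v, Suc (snd v)) (Poly_Mapping.lookup m v))"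

definition sigmaR :: "('k::field \<Rightarrow> 'k) \<Rightarrow> ('n, 'k) dpoly \<Rightarrow> ('n, 'k) dpoly" where
  "sigmaR s p = (\<Sum>m\<in>Poly_Mapping.keys p. Poly_Mapping.single (mon_shift m) (s (Poly_Mapping.lookup p m)))"

definition yvar :: "'n \<Rightarrow> ('n, 'k::field) dpoly" where
  "yvar i = Poly_Mapping.single (Poly_Mapping.single (i, 0) 1) 1"

text \<open>a^g for g \<in> N[x]: prod_i (sigma^i a)^(c_i).\<close>
definition spow :: "('k::field \<Rightarrow> 'k) \<Rightarrow> ('n, 'k) dpoly \<Rightarrow> nat poly \<Rightarrow> ('n, 'k) dpoly" where
  "spow s a g = (\<Prod>i\<le>Polynomial.degree g. ((sigmaR s ^^ i) a) ^ Polynomial.coeff g i)"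

definition ymon :: "('k::field \<Rightarrow> 'k) \<Rightarrow> ('n::finite \<Rightarrow> nat poly) \<Rightarrow> ('n, 'k) dpoly" where
  "ymon s u = (\<Prod>i\<in>UNIV. spow s (yvar i) (u i))"

definition is_ideal :: "'a::comm_ring_1 set \<Rightarrow> bool" where
  "is_ideal I \<longleftrightarrow> 0 \<in> I \<and> (\<forall>a\<in>I. \<forall>b\<in>I. a + b \<in> I) \<and> (\<forall>r. \<forall>a\<in>I. r * a \<in> I)"

definition is_sigma_ideal :: "('k::field \<Rightarrow> 'k) \<Rightarrow> ('n, 'k) dpoly set \<Rightarrow> bool" where
  "is_sigma_ideal s I \<longleftrightarrow> is_ideal I \<and> (\<forall>a\<in>I. sigmaR s a \<in> I)"

definition is_perfect_sigma_ideal :: "('k::field \<Rightarrow> 'k) \<Rightarrow> ('n, 'k) dpoly set \<Rightarrow> bool" where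
  "is_perfect_sigma_ideal s I \<longleftrightarrow> is_sigma_ideal s I \<and>
     (\<forall>a g. g \<noteq> 0 \<longrightarrow> spow s a g \<in> I \<longrightarrow> a \<in> I)"

definition perfect_closure :: "('k::field \<Rightarrow> 'k) \<Rightarrow> ('n, 'k) dpoly set \<Rightarrow> ('n, 'k) dpoly set" where
  "perfect_closure s F = \<Inter>{J. is_perfect_sigma_ideal s J \<and> F \<subseteq> J}"

definition sigma_ideal_gen :: "('k::field \<Rightarrow> 'k) \<Rightarrow> ('n, 'k) dpoly set \<Rightarrow> ('n, 'k) dpoly set" where
  "sigma_ideal_gen s F = \<Inter>{J. is_sigma_ideal s J \<and> F \<subseteq> J}"

text \<open>p^b for b \<in> {0,1}^n, encoded as b :: 'n \<Rightarrow> bool (b i \<longleftrightarrow> b_i = 1).\<close>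
definition pb :: "('k::field \<Rightarrow> 'k) \<Rightarrow> ('n \<Rightarrow> bool) \<Rightarrow> ('n, 'k) dpoly set" where
  "pb s b = sigma_ideal_gen s {yvar i | i. b i}"

end

theory Submission
  imports Defs "HOL-Library.Countable"
begin

abbreviation X :: "('n \<times> nat \<Rightarrow>\<^sub>0 nat) \<Rightarrow> ('n, 'k::field) dpoly" where
  "X m \<equiv> Poly_Mapping.single m 1"

lemma lookup_mon_shift:
  "Poly_Mapping.lookup (mon_shift m) (i, j) = (case j of 0 \<Rightarrow> 0 | Suc j' \<Rightarrow> Poly_Mapping.lookup m (i, j'))"
proof (cases j)
  case 0
  then show ?thesis by (simp add: mon_shift_def lookup_sum lookup_single when_def)
next
  case (Suc j')
  have "Poly_Mapping.lookup (mon_shift m) (i, j) =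
     (\<Sum>v\<in>Poly_Mapping.keys m. if v = (i, j') then Poly_Mapping.lookup m v else 0)"
    unfolding mon_shift_def lookup_sum lookup_single when_def using Suc
    by (intro sum.cong) auto
  also have "\<dots> = Poly_Mapping.lookup m (i, j')"
    by (simp add: in_keys_iff)
  finally show ?thesis using Suc by simp
qed

lemma mon_shift_add: "mon_shift (a + b) = mon_shift a + mon_shift b"
  by (rule poly_mapping_eqI) (auto simp: lookup_mon_shift lookup_add split: nat.splits)

lemma mon_shift_single: "mon_shift (Poly_Mapping.single (i, j) n) = Poly_Mapping.single (i, Suc j) n"
  by (rule poly_mapping_eqI) (auto simp: lookup_mon_shift lookup_single when_def split: nat.splits if_splits)

lemma mon_shift_inj: "mon_shift a = mon_shift b \<Longrightarrow> a = b"
proof (rule poly_mapping_eqI)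
  fix k assume "mon_shift a = mon_shift b"
  then have "Poly_Mapping.lookup (mon_shift a) (fst k, Suc (snd k)) = Poly_Mapping.lookup (mon_shift b) (fst k, Suc (snd k))"
    by simp
  then show "Poly_Mapping.lookup a k = Poly_Mapping.lookup b k" by (simp add: lookup_mon_shift)
qed

lemma keys_mon_shift: "v \<in> Poly_Mapping.keys (mon_shift m) \<Longrightarrow> \<exists>j. snd v = Suc j \<and> (fst v, j) \<in> Poly_Mapping.keys m"
  by (cases v; cases "snd v") (auto simp: in_keys_iff lookup_mon_shift)

lemma funpow_shift_lookup: "Poly_Mapping.lookup ((mon_shift ^^ N) m) (i, j + N) = Poly_Mapping.lookup m (i, j)"
  by (induction N) (auto simp: lookup_mon_shift)

lemma endo0: "ring_endo s \<Longrightarrow> s 0 = 0"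
  unfolding ring_endo_def by (metis add_cancel_right_right add_0)

lemma endo_inj0: "ring_endo s \<Longrightarrow> s x = 0 \<Longrightarrow> x = 0"
proof (rule ccontr)
  assume r: "ring_endo s" "s x = 0" "x \<noteq> 0"
  then have "s (x * inverse x) = s x * s (inverse x)" unfolding ring_endo_def by blast
  with r show False unfolding ring_endo_def by simp
qed

lemma sigmaR_single: "ring_endo s \<Longrightarrow> sigmaR s (Poly_Mapping.single m c) = Poly_Mapping.single (mon_shift m) (s c)"
  by (cases "c = 0") (auto simp: sigmaR_def endo0)

lemma sigmaR_X: "ring_endo s \<Longrightarrow> sigmaR s (X m :: ('n,'k::field) dpoly) = X (mon_shift m)"
  by (simp add: sigmaR_single ring_endo_def)

lemma keys_sigmaR: "Poly_Mapping.keys (sigmaR s a) \<subseteq> mon_shift ` Poly_Mapping.keys a"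
  unfolding sigmaR_def by (rule order_trans[OF keys_sum]) (auto split: if_splits)

lemma lookup_sigmaR_shift: "ring_endo s \<Longrightarrow> Poly_Mapping.lookup (sigmaR s a) (mon_shift m) = s (Poly_Mapping.lookup a m)"
proof -
  assume e: "ring_endo s"
  have "Poly_Mapping.lookup (sigmaR s a) (mon_shift m) =
     (\<Sum>v\<in>Poly_Mapping.keys a. if v = m then s (Poly_Mapping.lookup a v) else 0)"
    unfolding sigmaR_def lookup_sum lookup_single when_def
    by (intro sum.cong) (auto dest: mon_shift_inj)
  also have "\<dots> = s (Poly_Mapping.lookup a m)"
    using e by (simp add: in_keys_iff endo0)
  finally show ?thesis .
qed

lemma X_mult: "X a * X b = (X (a + b) :: ('n,'k::field) dpoly)"
  by (simp add: mult_single)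

lemma spow_11: "spow s a [:1,1:] = a * sigmaR s a"
  by (simp add: spow_def atMost_Suc)
lemma spow_01: "spow s a [:0,1:] = sigmaR s a"
  by (simp add: spow_def atMost_Suc)
lemma spow_2: "spow s a [:2:] = a ^ 2"
  by (simp add: spow_def)


lemma PJ_mult: "is_perfect_sigma_ideal s J \<Longrightarrow> a \<in> J \<Longrightarrow> r * a \<in> J"
  unfolding is_perfect_sigma_ideal_def is_sigma_ideal_def is_ideal_def by blast
lemma PJ_sigma: "is_perfect_sigma_ideal s J \<Longrightarrow> a \<in> J \<Longrightarrow> sigmaR s a \<in> J"
  unfolding is_perfect_sigma_ideal_def is_sigma_ideal_def by blast
lemma PJ_perf: "is_perfect_sigma_ideal s J \<Longrightarrow> g \<noteq> 0 \<Longrightarrow> spow s a g \<in> J \<Longrightarrow> a \<in> J"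
  unfolding is_perfect_sigma_ideal_def by blast

context
  fixes s :: "'k::field \<Rightarrow> 'k" and J :: "('n, 'k) dpoly set"
  assumes e: "ring_endo s" and PJ: "is_perfect_sigma_ideal s J"
begin

lemma L1: "X a \<in> J \<Longrightarrow> X (a + c) \<in> J"
  using PJ_mult[OF PJ, of "X a" "X c"] by (simp add: X_mult add.commute)

lemma L3: "X (mon_shift m) \<in> J \<Longrightarrow> X m \<in> J"
  by (rule PJ_perf[OF PJ, of "[:0,1:]"]) (simp, simp only: spow_01 sigmaR_X[OF e])

lemma L3N: "X ((mon_shift ^^ N) m) \<in> J \<Longrightarrow> X m \<in> J"
  by (induction N) (auto intro: L3)

lemma L4: "X (a + v + v) \<in> J \<Longrightarrow> X (a + v) \<in> J"
proof -
  assume h: "X (a + v + v) \<in> J"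
  have "spow s (X (a + v)) [:2:] = X a * X (a + v + v)"
    by (simp add: spow_2 power2_eq_square X_mult add_ac)
  with PJ_mult[OF PJ h] have "spow s (X (a + v)) [:2:] \<in> J" by simp
  then show ?thesis by (rule PJ_perf[OF PJ, rotated]) simp
qed

lemma L2: "X (a + b) \<in> J \<Longrightarrow> X (a + mon_shift b) \<in> J"
proof -
  assume h: "X (a + b) \<in> J"
  have "sigmaR s (X (a + b)) \<in> J" using PJ_sigma[OF PJ h] .
  then have h2: "X (mon_shift a + mon_shift b) \<in> J" by (simp add: sigmaR_X[OF e] mon_shift_add)
  have "spow s (X (a + mon_shift b)) [:1,1:] = X (a + mon_shift (mon_shift b)) * X (mon_shift a + mon_shift b)"
    unfolding spow_11 sigmaR_X[OF e] X_mult mon_shift_add by (simp add: add_ac)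
  with PJ_mult[OF PJ h2] have "spow s (X (a + mon_shift b)) [:1,1:] \<in> J" by simp
  then show ?thesis by (rule PJ_perf[OF PJ, rotated]) simp
qed

lemma L2k: "X (a + Poly_Mapping.single (i, j) 1) \<in> J \<Longrightarrow> X (a + Poly_Mapping.single (i, j + k) 1) \<in> J"
proof (induction k)
  case (Suc k)
  then show ?case using L2[of a "Poly_Mapping.single (i, j + k) 1"] by (simp add: mon_shift_single)
qed simp

end

lemma pm_split1: "Poly_Mapping.lookup (t :: 'a \<Rightarrow>\<^sub>0 nat) w \<noteq> 0 \<Longrightarrow> t = (t - Poly_Mapping.single w 1) + Poly_Mapping.single w 1"
  by (rule poly_mapping_eqI) (auto simp: lookup_add lookup_minus lookup_single when_def)

lemma update_eq_add: "a \<notin> Poly_Mapping.keys p \<Longrightarrow> Poly_Mapping.update a c p = p + Poly_Mapping.single a c"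
  by (rule poly_mapping_eqI) (auto simp: lookup_update lookup_add lookup_single when_def in_keys_iff)

lemma pm_induct1:
  assumes "P 0" and step: "\<And>a v. P a \<Longrightarrow> P (a + Poly_Mapping.single v (1::nat))"
  shows "P a"
proof (induction a rule: update_induct)
  case const then show ?case using assms(1) .
next
  case (update f a b)
  have "P (f + Poly_Mapping.single a c)" for c
  proof (induction c)
    case 0 then show ?case using update by simp
  next
    case (Suc c)
    have "Poly_Mapping.single a (Suc c) = Poly_Mapping.single a c + Poly_Mapping.single a 1"
      by (simp add: single_add[symmetric])
    then show ?case using step[OF Suc, of a] by (simp add: add.assoc)
  qed
  then show ?case using update by (simp add: update_eq_add)
qed

lemma keys_add_nat: "Poly_Mapping.keys (a + b :: 'a \<Rightarrow>\<^sub>0 nat) = Poly_Mapping.keys a \<union> Poly_Mapping.keys b"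
  by (auto simp: in_keys_iff lookup_add)

context
  fixes s :: "'k::field \<Rightarrow> 'k" and J :: "('n, 'k) dpoly set"
  assumes e: "ring_endo s" and PJ: "is_perfect_sigma_ideal s J"
begin

lemma H: "(\<forall>v\<in>Poly_Mapping.keys a. snd v \<le> N \<and> fst v \<in> fst ` Poly_Mapping.keys m) \<longrightarrow>
   (\<forall>c. X (a + c) \<in> J \<longrightarrow> X ((mon_shift ^^ N) m + c) \<in> J)"
proof (induction a rule: pm_induct1)
  case 1
  then show ?case using L1[OF e PJ] by (simp add: add.commute)
next
  case (2 a v)
  show ?case
  proof (intro impI allI)
    fix c
    assume k: "\<forall>w\<in>Poly_Mapping.keys (a + Poly_Mapping.single v 1). snd w \<le> N \<and> fst w \<in> fst ` Poly_Mapping.keys m"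
      and h: "X (a + Poly_Mapping.single v 1 + c) \<in> J"
    obtain i j where v: "v = (i, j)" by fastforce
    have "snd v \<le> N \<and> fst v \<in> fst ` Poly_Mapping.keys m" using k by (simp add: keys_add_nat)
    then obtain j' where j: "j \<le> N" "(i, j') \<in> Poly_Mapping.keys m" using v by force
    have "X ((a + c) + Poly_Mapping.single (i, j) 1) \<in> J" using h v by (simp add: add_ac)
    then have "X ((a + c) + Poly_Mapping.single (i, j + (j' + N - j)) 1) \<in> J" by (rule L2k[OF e PJ])
    then have "X (a + (c + Poly_Mapping.single (i, j' + N) 1)) \<in> J" using j by (simp add: add_ac)
    moreover have "\<forall>w\<in>Poly_Mapping.keys a. snd w \<le> N \<and> fst w \<in> fst ` Poly_Mapping.keys m"
      using k by (simp add: keys_add_nat)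
    ultimately have h3: "X ((mon_shift ^^ N) m + (c + Poly_Mapping.single (i, j' + N) 1)) \<in> J"
      using 2 by blast
    define w where "w = (i, j' + N)"
    have "Poly_Mapping.lookup ((mon_shift ^^ N) m) w \<noteq> 0"
      using j(2) by (simp add: w_def funpow_shift_lookup in_keys_iff)
    then have sp: "(mon_shift ^^ N) m = ((mon_shift ^^ N) m - Poly_Mapping.single w 1) + Poly_Mapping.single w 1"
      by (rule pm_split1)
    define r where "r = (mon_shift ^^ N) m - Poly_Mapping.single w 1"
    have sp': "(mon_shift ^^ N) m = r + Poly_Mapping.single w 1" using sp unfolding r_def .
    have "X ((r + c) + Poly_Mapping.single w 1 + Poly_Mapping.single w 1) \<in> J"
      using h3 unfolding w_def[symmetric] sp' by (simp add: add_ac)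
    then have "X ((r + c) + Poly_Mapping.single w 1) \<in> J" by (rule L4[OF e PJ])
    then show "X ((mon_shift ^^ N) m + c) \<in> J" unfolding sp' by (simp add: add_ac)
  qed
qed

lemma main_mon: "X mu \<in> J \<Longrightarrow> fst ` Poly_Mapping.keys mu \<subseteq> fst ` Poly_Mapping.keys m \<Longrightarrow> X m \<in> J"
proof -
  assume h: "X mu \<in> J" "fst ` Poly_Mapping.keys mu \<subseteq> fst ` Poly_Mapping.keys m"
  define N where "N = Max (insert 0 (snd ` Poly_Mapping.keys mu))"
  have "\<forall>v\<in>Poly_Mapping.keys mu. snd v \<le> N \<and> fst v \<in> fst ` Poly_Mapping.keys m"
    using h(2) by (auto simp: N_def)
  then have "\<forall>c. X (mu + c) \<in> J \<longrightarrow> X ((mon_shift ^^ N) m + c) \<in> J" using H[of mu N m] by blast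
  then have "X (mu + 0) \<in> J \<longrightarrow> X ((mon_shift ^^ N) m + 0) \<in> J" by (rule spec)
  then have "X ((mon_shift ^^ N) m + 0) \<in> J" using h(1) by simp
  then show ?thesis using L3N[OF e PJ] by simp
qed

end

lemma pm_expand: "f = (\<Sum>a\<in>Poly_Mapping.keys f. Poly_Mapping.single a (Poly_Mapping.lookup f a))"
proof (rule poly_mapping_eqI)
  fix k
  have "(\<Sum>a\<in>Poly_Mapping.keys f. Poly_Mapping.lookup (Poly_Mapping.single a (Poly_Mapping.lookup f a)) k)
      = (\<Sum>a\<in>Poly_Mapping.keys f. if a = k then Poly_Mapping.lookup f a else 0)"
    by (intro sum.cong) (auto simp: lookup_single when_def)
  also have "\<dots> = Poly_Mapping.lookup f k" by (simp add: in_keys_iff)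
  finally show "Poly_Mapping.lookup f k = Poly_Mapping.lookup (\<Sum>a\<in>Poly_Mapping.keys f. Poly_Mapping.single a (Poly_Mapping.lookup f a)) k"
    by (simp add: lookup_sum)
qed

lemma mult_nonzero_gen:
  fixes f g :: "'m::comm_monoid_add \<Rightarrow>\<^sub>0 'b::{semiring_0, semiring_no_zero_divisors}"
    and \<phi> :: "'m \<Rightarrow> 'o::{ordered_cancel_comm_monoid_add, linorder}"
  assumes inj: "inj \<phi>" and add: "\<And>x y. \<phi> (x + y) = \<phi> x + \<phi> y" and nz: "f \<noteq> 0" "g \<noteq> 0"
  shows "f * g \<noteq> 0"
proof -
  define F where "F = Poly_Mapping.keys f"
  define G where "G = Poly_Mapping.keys g"
  have fin: "finite F" "finite G" by (simp_all add: F_def G_def)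
  have ne: "F \<noteq> {}" "G \<noteq> {}" using nz by (simp_all add: F_def G_def)
  have "Max (\<phi> ` F) \<in> \<phi> ` F" using fin ne by simp
  then obtain aM where aM: "aM \<in> F" "\<phi> aM = Max (\<phi> ` F)" by auto
  have aMx: "\<And>a. a \<in> F \<Longrightarrow> \<phi> a \<le> \<phi> aM" using aM fin by simp
  have "Max (\<phi> ` G) \<in> \<phi> ` G" using fin ne by simp
  then obtain bM where bM: "bM \<in> G" "\<phi> bM = Max (\<phi> ` G)" by auto
  have bMx: "\<And>b. b \<in> G \<Longrightarrow> \<phi> b \<le> \<phi> bM" using bM fin by simp
  have key: "a = aM \<and> b = bM" if "a \<in> F" "b \<in> G" "a + b = aM + bM" for a b
  proof -
    have s: "\<phi> a + \<phi> b = \<phi> aM + \<phi> bM" using that(3) add by metis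
    have la: "\<phi> a \<le> \<phi> aM" "\<phi> b \<le> \<phi> bM" using aMx bMx that by auto
    have "\<phi> a = \<phi> aM"
    proof (rule ccontr)
      assume "\<phi> a \<noteq> \<phi> aM"
      then have "\<phi> a < \<phi> aM" using la by simp
      then have "\<phi> a + \<phi> b < \<phi> aM + \<phi> bM" using la(2) by (rule add_less_le_mono)
      then show False using s by simp
    qed
    then have "\<phi> b = \<phi> bM" using s by simp
    with \<open>\<phi> a = \<phi> aM\<close> show ?thesis using inj by (auto dest: injD)
  qed
  define lf where "lf = Poly_Mapping.lookup f"
  define lg where "lg = Poly_Mapping.lookup g"
  have "f * g = (\<Sum>a\<in>F. Poly_Mapping.single a (lf a)) * (\<Sum>b\<in>G. Poly_Mapping.single b (lg b))"
    using pm_expand[of f] pm_expand[of g] by (simp add: F_def G_def lf_def lg_def)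
  also have "\<dots> = (\<Sum>a\<in>F. \<Sum>b\<in>G. Poly_Mapping.single (a + b) (lf a * lg b))"
    by (simp add: sum_product mult_single)
  finally have fg: "Poly_Mapping.lookup (f * g) (aM + bM) =
     (\<Sum>a\<in>F. \<Sum>b\<in>G. if a + b = aM + bM then lf a * lg b else 0)"
    by (simp add: lookup_sum lookup_single when_def)
  also have "\<dots> = (\<Sum>a\<in>F. \<Sum>b\<in>G. if a = aM \<and> b = bM then lf a * lg b else 0)"
    by (intro sum.cong refl) (auto dest: key)
  also have "\<dots> = (\<Sum>a\<in>F. if a = aM then lf a * lg bM else 0)"
    by (intro sum.cong refl) (auto simp: bM fin)
  also have "\<dots> = lf aM * lg bM" using aM fin by simp
  finally have "Poly_Mapping.lookup (f * g) (aM + bM) \<noteq> 0"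
    using aM bM by (simp add: F_def G_def lf_def lg_def in_keys_iff)
  then show ?thesis by auto
qed

definition phiM :: "('n::finite \<times> nat \<Rightarrow>\<^sub>0 nat) \<Rightarrow> (nat \<Rightarrow>\<^sub>0 nat)" where
  "phiM m = Abs_poly_mapping (\<lambda>k. if k \<in> range (to_nat :: 'n \<times> nat \<Rightarrow> nat) then Poly_Mapping.lookup m (from_nat k) else 0)"

lemma lookup_phiM: "Poly_Mapping.lookup (phiM (m :: 'n::finite \<times> nat \<Rightarrow>\<^sub>0 nat)) k = (if k \<in> range (to_nat :: 'n \<times> nat \<Rightarrow> nat) then Poly_Mapping.lookup m (from_nat k) else 0)"
proof -
  define h where "h = (\<lambda>k. if k \<in> range (to_nat :: 'n \<times> nat \<Rightarrow> nat) then Poly_Mapping.lookup m (from_nat k) else 0)"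
  have "{k. h k \<noteq> 0} \<subseteq> to_nat ` Poly_Mapping.keys m"
  proof
    fix k assume "k \<in> {k. h k \<noteq> 0}"
    then have k: "k \<in> range (to_nat :: 'n \<times> nat \<Rightarrow> nat)" "Poly_Mapping.lookup m (from_nat k) \<noteq> 0"
      unfolding h_def by (simp_all split: if_splits)
    then obtain v :: "'n \<times> nat" where v: "k = to_nat v" by blast
    then have "v \<in> Poly_Mapping.keys m" using k(2) by (simp add: in_keys_iff)
    then show "k \<in> to_nat ` Poly_Mapping.keys m" using v by blast
  qed
  then have "finite {k. h k \<noteq> 0}" by (rule finite_subset) simp
  then have "Poly_Mapping.lookup (Abs_poly_mapping h) k = h k" by simp
  then show ?thesis unfolding phiM_def h_def[symmetric] by (simp add: h_def)
qed

lemma phiM_add: "phiM (a + b :: 'n::finite \<times> nat \<Rightarrow>\<^sub>0 nat) = phiM a + phiM b"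
  by (rule poly_mapping_eqI) (simp add: lookup_phiM lookup_add)

lemma phiM_inj: "inj (phiM :: ('n::finite \<times> nat \<Rightarrow>\<^sub>0 nat) \<Rightarrow> _)"
proof (rule injI)
  fix a b :: "'n \<times> nat \<Rightarrow>\<^sub>0 nat" assume "phiM a = phiM b"
  have "Poly_Mapping.lookup (phiM c) (to_nat v) = Poly_Mapping.lookup c v" for c :: "'n \<times> nat \<Rightarrow>\<^sub>0 nat" and v
    by (simp add: lookup_phiM from_nat_to_nat)
  then show "a = b" using \<open>phiM a = phiM b\<close> by (intro poly_mapping_eqI) metis
qed

lemma dpoly_mult_nz: "(f :: ('n::finite, 'k::field) dpoly) \<noteq> 0 \<Longrightarrow> g \<noteq> 0 \<Longrightarrow> f * g \<noteq> 0"
  using mult_nonzero_gen[where \<phi>=phiM, OF phiM_inj phiM_add] by blast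


definition Pb :: "('n \<Rightarrow> bool) \<Rightarrow> ('n, 'k::field) dpoly set" where
  "Pb b = {f. \<forall>m\<in>Poly_Mapping.keys f. \<exists>v\<in>Poly_Mapping.keys m. b (fst v)}"

definition free :: "('n \<Rightarrow> bool) \<Rightarrow> ('n \<times> nat \<Rightarrow>\<^sub>0 nat) \<Rightarrow> bool" where
  "free b m \<longleftrightarrow> (\<forall>v\<in>Poly_Mapping.keys m. \<not> b (fst v))"

lemma notin_Pb: "f \<notin> Pb b \<longleftrightarrow> (\<exists>m\<in>Poly_Mapping.keys f. free b m)"
  by (simp add: Pb_def free_def)

lemma Pb_zero: "0 \<in> Pb b" by (simp add: Pb_def)

lemma Pb_add: "f \<in> Pb b \<Longrightarrow> g \<in> Pb b \<Longrightarrow> f + g \<in> Pb b"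
proof -
  assume f: "f \<in> Pb b" and g: "g \<in> Pb b"
  show ?thesis unfolding Pb_def mem_Collect_eq
  proof (rule ballI)
    fix m assume "m \<in> Poly_Mapping.keys (f + g)"
    then have "m \<in> Poly_Mapping.keys f \<union> Poly_Mapping.keys g" using keys_add[of f g] by blast
    moreover have "\<forall>m\<in>Poly_Mapping.keys f. \<exists>v\<in>Poly_Mapping.keys m. b (fst v)" using f by (simp add: Pb_def)
    moreover have "\<forall>m\<in>Poly_Mapping.keys g. \<exists>v\<in>Poly_Mapping.keys m. b (fst v)" using g by (simp add: Pb_def)
    ultimately show "\<exists>v\<in>Poly_Mapping.keys m. b (fst v)" by blast
  qed
qed

lemma Pb_mult: "f \<in> Pb b \<Longrightarrow> r * f \<in> Pb b"
proof -
  assume f: "f \<in> Pb b"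
  show ?thesis unfolding Pb_def mem_Collect_eq
  proof (rule ballI)
    fix m assume "m \<in> Poly_Mapping.keys (r * f)"
    then obtain x y where "m = x + y" "y \<in> Poly_Mapping.keys f" using keys_mult[of r f] by blast
    then show "\<exists>v\<in>Poly_Mapping.keys m. b (fst v)" using f unfolding Pb_def by (auto simp: keys_add_nat)
  qed
qed

lemma Pb_sigma: "f \<in> Pb b \<Longrightarrow> sigmaR s f \<in> Pb b"
proof -
  assume f: "f \<in> Pb b"
  show ?thesis unfolding Pb_def mem_Collect_eq
  proof (rule ballI)
    fix m assume "m \<in> Poly_Mapping.keys (sigmaR s f)"
    then obtain m0 where m0: "m = mon_shift m0" "m0 \<in> Poly_Mapping.keys f" using keys_sigmaR[of s f] by blast
    then obtain v where v: "v \<in> Poly_Mapping.keys m0" "b (fst v)" using f unfolding Pb_def by blast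
    have "Poly_Mapping.lookup m (fst v, Suc (snd v)) \<noteq> 0" using v(1) m0(1)
      by (simp add: lookup_mon_shift in_keys_iff)
    then show "\<exists>v\<in>Poly_Mapping.keys m. b (fst v)" using v(2) by (intro bexI[of _ "(fst v, Suc (snd v))"]) (auto simp: in_keys_iff)
  qed
qed

lemma Pb_ideal: "is_sigma_ideal s (Pb b)"
  unfolding is_sigma_ideal_def is_ideal_def by (auto intro: Pb_zero Pb_add Pb_mult Pb_sigma)

lemma one_notin_Pb: "1 \<notin> Pb b"
  by (simp add: Pb_def)

definition restr :: "(('n \<times> nat \<Rightarrow>\<^sub>0 nat) \<Rightarrow> bool) \<Rightarrow> ('n, 'k::field) dpoly \<Rightarrow> ('n, 'k) dpoly" where
  "restr P f = Abs_poly_mapping (\<lambda>m. if P m then Poly_Mapping.lookup f m else 0)"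

lemma lookup_restr: "Poly_Mapping.lookup (restr P f) m = (if P m then Poly_Mapping.lookup f m else 0)"
proof -
  have "{m. (if P m then Poly_Mapping.lookup f m else 0) \<noteq> 0} \<subseteq> Poly_Mapping.keys f"
    by (auto simp: in_keys_iff split: if_splits)
  then have "finite {m. (if P m then Poly_Mapping.lookup f m else 0) \<noteq> 0}" by (rule finite_subset) simp
  then show ?thesis by (simp add: restr_def)
qed

lemma restr_split: "f = restr P f + restr (\<lambda>m. \<not> P m) f"
  by (rule poly_mapping_eqI) (simp add: lookup_add lookup_restr)

lemma keys_restr: "m \<in> Poly_Mapping.keys (restr P f) \<longleftrightarrow> P m \<and> m \<in> Poly_Mapping.keys f"
  by (simp add: in_keys_iff lookup_restr)

lemma Pb_neg: "f \<in> Pb b \<Longrightarrow> - f \<in> Pb b"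
  using Pb_mult[of f b "-1"] by simp

lemma Pb_prime:
  fixes a c :: "('n::finite, 'k::field) dpoly"
  assumes a: "a \<notin> Pb b" and c: "c \<notin> Pb b"
  shows "a * c \<notin> Pb b"
proof
  assume ac: "a * c \<in> Pb b"
  define Fa where "Fa = restr (free b) a"
  define Ra where "Ra = restr (\<lambda>m. \<not> free b m) a"
  define Fc where "Fc = restr (free b) c"
  define Rc where "Rc = restr (\<lambda>m. \<not> free b m) c"
  have sa: "a = Fa + Ra" and sc: "c = Fc + Rc" unfolding Fa_def Ra_def Fc_def Rc_def by (rule restr_split)+
  have Ra: "Ra \<in> Pb b" unfolding Pb_def Ra_def by (auto simp: keys_restr free_def)
  have Rc: "Rc \<in> Pb b" unfolding Pb_def Rc_def by (auto simp: keys_restr free_def)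
  have Fa0: "Fa \<noteq> 0" using a unfolding notin_Pb Fa_def
    by (metis keys_restr keys_zero empty_iff)
  have Fc0: "Fc \<noteq> 0" using c unfolding notin_Pb Fc_def
    by (metis keys_restr keys_zero empty_iff)
  have eq: "Fa * Fc = a * c + - (Fa * Rc + Ra * c)"
    unfolding sa sc by (simp add: algebra_simps)
  have "Fa * Rc \<in> Pb b" by (rule Pb_mult[OF Rc])
  moreover have "c * Ra \<in> Pb b" by (rule Pb_mult[OF Ra])
  ultimately have h: "Fa * Rc + Ra * c \<in> Pb b" by (simp add: Pb_add mult.commute[of Ra])
  have "Fa * Fc \<in> Pb b"
    unfolding eq by (rule Pb_add[OF ac Pb_neg[OF h]])
  moreover have "free b m" if mk: "m \<in> Poly_Mapping.keys (Fa * Fc)" for m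
  proof -
    obtain x y where "m = x + y" "x \<in> Poly_Mapping.keys Fa" "y \<in> Poly_Mapping.keys Fc"
      using keys_mult[of Fa Fc] mk by blast
    then have fx: "free b x" "free b y" unfolding Fa_def Fc_def by (simp_all add: keys_restr)
    show ?thesis unfolding \<open>m = x + y\<close> free_def keys_add_nat using fx unfolding free_def by blast
  qed
  ultimately have "Poly_Mapping.keys (Fa * Fc) = {}"
  proof -
    assume h1: "Fa * Fc \<in> Pb b" and h2: "\<And>m. m \<in> Poly_Mapping.keys (Fa * Fc) \<Longrightarrow> free b m"
    have "\<And>m. m \<in> Poly_Mapping.keys (Fa * Fc) \<Longrightarrow> \<exists>v\<in>Poly_Mapping.keys m. b (fst v)"
      using h1 by (simp add: Pb_def)
    then show ?thesis using h2 unfolding free_def by blast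
  qed
  then have "Fa * Fc = 0" by simp
  with dpoly_mult_nz[OF Fa0 Fc0] show False by simp
qed

lemma sigma_notin:
  assumes e: "ring_endo s" and a: "a \<notin> Pb b"
  shows "sigmaR s a \<notin> Pb b"
proof -
  obtain m where m: "m \<in> Poly_Mapping.keys a" "free b m" using a notin_Pb by blast
  have "Poly_Mapping.lookup (sigmaR s a) (mon_shift m) \<noteq> 0"
    using m(1) endo_inj0[OF e] by (auto simp: lookup_sigmaR_shift[OF e] in_keys_iff)
  moreover have "free b (mon_shift m)" using m(2) unfolding free_def by (auto dest!: keys_mon_shift)
  ultimately show ?thesis unfolding notin_Pb by (auto simp: in_keys_iff)
qed

lemma sigma_pow_notin: "ring_endo s \<Longrightarrow> a \<notin> Pb b \<Longrightarrow> (sigmaR s ^^ i) a \<notin> Pb b"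
  by (induction i) (auto dest: sigma_notin)

lemma power_notin: "(a :: ('n::finite, 'k::field) dpoly) \<notin> Pb b \<Longrightarrow> a ^ n \<notin> Pb b"
  by (induction n) (auto simp: one_notin_Pb dest: Pb_prime)

lemma prod_notin:
  fixes f :: "'i \<Rightarrow> ('n::finite, 'k::field) dpoly"
  shows "finite A \<Longrightarrow> (\<And>i. i \<in> A \<Longrightarrow> f i \<notin> Pb b) \<Longrightarrow> prod f A \<notin> Pb b"
  by (induction A rule: finite_induct) (auto simp: one_notin_Pb dest: Pb_prime)

lemma spow_notin: "ring_endo s \<Longrightarrow> (a :: ('n::finite, 'k::field) dpoly) \<notin> Pb b \<Longrightarrow> spow s a g \<notin> Pb b"
  unfolding spow_def by (intro prod_notin power_notin sigma_pow_notin) auto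

lemma Pb_perfect: "ring_endo s \<Longrightarrow> is_perfect_sigma_ideal s (Pb b :: ('n::finite, 'k::field) dpoly set)"
  unfolding is_perfect_sigma_ideal_def using Pb_ideal spow_notin by blast

lemma yvar_Pb: "yvar i \<in> Pb b \<longleftrightarrow> b i"
  by (simp add: Pb_def yvar_def)

lemma sigma_pow_yvar: "ring_endo s \<Longrightarrow> (sigmaR s ^^ j) (yvar i) = (X (Poly_Mapping.single (i, j) 1) :: ('n, 'k::field) dpoly)"
  by (induction j) (auto simp: yvar_def sigmaR_X mon_shift_single)

lemma sig_pow_in: "is_sigma_ideal s J \<Longrightarrow> a \<in> J \<Longrightarrow> (sigmaR s ^^ j) a \<in> J"
  by (induction j) (auto simp: is_sigma_ideal_def)

lemma ideal_sum:
  assumes "is_ideal J" "finite A" "\<And>i. i \<in> A \<Longrightarrow> f i \<in> J"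
  shows "sum f A \<in> J"
  using assms(2,3) by (induction A rule: finite_induct) (use assms(1) in \<open>auto simp: is_ideal_def\<close>)

lemma Pb_eq: "ring_endo s \<Longrightarrow> pb s b = (Pb b :: ('n, 'k::field) dpoly set)"
proof
  assume e: "ring_endo s"
  show "pb s b \<subseteq> Pb b" unfolding pb_def sigma_ideal_gen_def
    using Pb_ideal[of s b] yvar_Pb[of _ b] by blast
  show "Pb b \<subseteq> pb s b" unfolding pb_def sigma_ideal_gen_def
  proof (rule Inter_greatest)
    fix J assume "J \<in> {J. is_sigma_ideal s J \<and> {yvar i |i. b i} \<subseteq> J}"
    then have J: "is_sigma_ideal s J" "\<And>i. b i \<Longrightarrow> yvar i \<in> J" by auto
    then have Ji: "is_ideal J" by (simp add: is_sigma_ideal_def)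
    show "Pb b \<subseteq> J"
    proof
      fix f :: "('n, 'k) dpoly" assume f: "f \<in> Pb b"
      have "Poly_Mapping.single m (Poly_Mapping.lookup f m) \<in> J" if m: "m \<in> Poly_Mapping.keys f" for m
      proof -
        obtain v where v: "v \<in> Poly_Mapping.keys m" "b (fst v)" using f m unfolding Pb_def by blast
        obtain i j where ij: "v = (i, j)" by fastforce
        have "(sigmaR s ^^ j) (yvar i) \<in> J"
          using sig_pow_in[OF J(1) J(2), of i j] v ij by simp
        then have "X (Poly_Mapping.single (i, j) 1) \<in> J" by (simp only: sigma_pow_yvar[OF e])
        then have "Poly_Mapping.single (m - Poly_Mapping.single v 1) (Poly_Mapping.lookup f m) * X (Poly_Mapping.single v 1) \<in> J"
          using Ji ij unfolding is_ideal_def by blast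
        moreover have "m - Poly_Mapping.single v 1 + Poly_Mapping.single v 1 = m"
          using pm_split1[of m v] v(1) by (simp add: in_keys_iff)
        ultimately show ?thesis by (simp add: mult_single)
      qed
      then have "(\<Sum>m\<in>Poly_Mapping.keys f. Poly_Mapping.single m (Poly_Mapping.lookup f m)) \<in> J"
        by (intro ideal_sum[OF Ji]) auto
      then show "f \<in> J" using pm_expand[of f] by simp
    qed
  qed
qed


lemma pc_perfect: "is_perfect_sigma_ideal s (perfect_closure s F)"
proof -
  let ?Fam = "{J. is_perfect_sigma_ideal s J \<and> F \<subseteq> J}"
  have P: "\<And>J. J \<in> ?Fam \<Longrightarrow> is_perfect_sigma_ideal s J" by simp
  have "0 \<in> \<Inter>?Fam"
    using P unfolding is_perfect_sigma_ideal_def is_sigma_ideal_def is_ideal_def by blast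
  moreover have "\<forall>a\<in>\<Inter>?Fam. \<forall>b\<in>\<Inter>?Fam. a + b \<in> \<Inter>?Fam"
    using P unfolding is_perfect_sigma_ideal_def is_sigma_ideal_def is_ideal_def by blast
  moreover have "\<forall>r. \<forall>a\<in>\<Inter>?Fam. r * a \<in> \<Inter>?Fam"
    using P unfolding is_perfect_sigma_ideal_def is_sigma_ideal_def is_ideal_def by blast
  moreover have "\<forall>a\<in>\<Inter>?Fam. sigmaR s a \<in> \<Inter>?Fam"
    using P unfolding is_perfect_sigma_ideal_def is_sigma_ideal_def by blast
  moreover have "\<forall>a g. g \<noteq> 0 \<longrightarrow> spow s a g \<in> \<Inter>?Fam \<longrightarrow> a \<in> \<Inter>?Fam"
    using P unfolding is_perfect_sigma_ideal_def by blast
  ultimately show ?thesis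
    unfolding perfect_closure_def is_perfect_sigma_ideal_def is_sigma_ideal_def is_ideal_def by blast
qed

lemma pc_gens: "F \<subseteq> perfect_closure s F"
  unfolding perfect_closure_def by blast

lemma pc_least: "is_perfect_sigma_ideal s J \<Longrightarrow> F \<subseteq> J \<Longrightarrow> perfect_closure s F \<subseteq> J"
  unfolding perfect_closure_def by blast

lemma X_pow: "\<exists>m'. (X m :: ('n,'k::field) dpoly) ^ n = X m'"
proof (induction n)
  case 0 then show ?case by (intro exI[of _ 0]) simp
next
  case (Suc n)
  then obtain m' where "(X m :: ('n,'k) dpoly) ^ n = X m'" by blast
  then show ?case by (intro exI[of _ "m + m'"]) (simp add: X_mult)
qed

lemma X_prod:
  fixes f :: "'i \<Rightarrow> ('n,'k::field) dpoly"
  shows "finite A \<Longrightarrow> (\<And>i. i \<in> A \<Longrightarrow> \<exists>m. f i = X m) \<Longrightarrow> \<exists>m. prod f A = X m"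
proof (induction A rule: finite_induct)
  case empty then show ?case by (intro exI[of _ 0]) simp
next
  case (insert x A)
  then obtain m1 m2 where "f x = X m1" "prod f A = X m2" by blast
  then show ?case using insert by (intro exI[of _ "m1 + m2"]) (simp add: X_mult)
qed

lemma ymon_X: "ring_endo s \<Longrightarrow> \<exists>mu. ymon s u = (X mu :: ('n::finite, 'k::field) dpoly)"
  unfolding ymon_def spow_def
  by (intro X_prod) (auto simp: sigma_pow_yvar X_pow)

lemma avoid:
  fixes c :: "'n::finite \<Rightarrow> bool"
  assumes fin: "finite B" and sub: "(\<Inter>b\<in>B. (Pb b :: ('n,'k::field) dpoly set)) \<subseteq> Pb c"
  shows "\<exists>b\<in>B. (Pb b :: ('n,'k) dpoly set) \<subseteq> Pb c"
proof (rule ccontr)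
  assume "\<not> ?thesis"
  then have "\<forall>b\<in>B. \<exists>f. f \<in> (Pb b :: ('n,'k) dpoly set) \<and> f \<notin> Pb c" by blast
  then obtain g where g: "\<And>b. b \<in> B \<Longrightarrow> g b \<in> (Pb b :: ('n,'k) dpoly set) \<and> g b \<notin> Pb c" by metis
  have "prod g B \<notin> Pb c" using fin g by (intro prod_notin) auto
  moreover have "prod g B \<in> Pb b" if b: "b \<in> B" for b
  proof -
    have "prod g B = g b * prod g (B - {b})" using fin b by (simp add: prod.remove)
    then show ?thesis using Pb_mult[of "g b" b "prod g (B - {b})"] g[OF b] by (simp add: mult.commute)
  qed
  ultimately show False using sub by blast
qed

lemma Pb_inj:
  assumes "(Pb b :: ('n,'k::field) dpoly set) = Pb c"
  shows "b = c"
proof (rule ext)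
  fix i
  have "b i \<longleftrightarrow> (yvar i :: ('n,'k) dpoly) \<in> Pb b" by (simp add: yvar_Pb)
  also have "\<dots> \<longleftrightarrow> (yvar i :: ('n,'k) dpoly) \<in> Pb c" using assms by simp
  also have "\<dots> \<longleftrightarrow> c i" by (simp add: yvar_Pb)
  finally show "b i = c i" .
qed

lemma uniq_sub:
  fixes B1 B2 :: "('n::finite \<Rightarrow> bool) set"
  assumes f1: "finite B1" and f2: "finite B2"
    and eq: "(\<Inter>b\<in>B1. (Pb b :: ('n,'k::field) dpoly set)) = (\<Inter>b\<in>B2. Pb b)"
    and irr: "\<forall>b\<in>B2. (\<Inter>c\<in>B2 - {b}. (Pb c :: ('n,'k) dpoly set)) \<noteq> (\<Inter>b\<in>B2. Pb b)"
  shows "B2 \<subseteq> B1"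
proof
  fix c assume c: "c \<in> B2"
  have "(\<Inter>b\<in>B1. (Pb b :: ('n,'k) dpoly set)) \<subseteq> Pb c" using eq c by blast
  then obtain b where b: "b \<in> B1" "(Pb b :: ('n,'k) dpoly set) \<subseteq> Pb c" using avoid[OF f1] by blast
  have "(\<Inter>b\<in>B2. (Pb b :: ('n,'k) dpoly set)) \<subseteq> Pb b" using eq b(1) by blast
  then obtain c' where c': "c' \<in> B2" "(Pb c' :: ('n,'k) dpoly set) \<subseteq> Pb b" using avoid[OF f2] by blast
  have "c' = c"
  proof (rule ccontr)
    assume ne: "c' \<noteq> c"
    have "(\<Inter>d\<in>B2 - {c}. (Pb d :: ('n,'k) dpoly set)) \<subseteq> Pb c" using c' b ne by blast
    then have "(\<Inter>d\<in>B2 - {c}. (Pb d :: ('n,'k) dpoly set)) = (\<Inter>b\<in>B2. Pb b)" by blast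
    then show False using irr c by blast
  qed
  then have "(Pb b :: ('n,'k) dpoly set) = Pb c" using b c' by blast
  then have "b = c" by (rule Pb_inj)
  then show "c \<in> B1" using b by simp
qed

theorem theorem6p3:
  fixes s :: "'k::field_char_0 \<Rightarrow> 'k"
    and S :: "('n::finite \<Rightarrow> nat poly) set"
  assumes "ring_endo s"
  defines "I \<equiv> perfect_closure s (ymon s ` S)"
  shows "(\<exists>B :: ('n \<Rightarrow> bool) set. finite B \<and> I = (\<Inter>b\<in>B. pb s b))
       \<and> (\<forall>B1 B2 :: ('n \<Rightarrow> bool) set.
            finite B1 \<and> finite B2 \<and>
            I = (\<Inter>b\<in>B1. pb s b) \<and> (\<forall>b\<in>B1. (\<Inter>c\<in>B1 - {b}. pb s c) \<noteq> I) \<and>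
            I = (\<Inter>b\<in>B2. pb s b) \<and> (\<forall>b\<in>B2. (\<Inter>c\<in>B2 - {b}. pb s c) \<noteq> I)
            \<longrightarrow> B1 = B2)"
proof -
  note e = assms(1)
  have pbeq: "pb s = (Pb :: ('n \<Rightarrow> bool) \<Rightarrow> ('n,'k) dpoly set)" by (rule ext) (rule Pb_eq[OF e])
  have Iperf: "is_perfect_sigma_ideal s I" unfolding I_def by (rule pc_perfect)
  have Igen: "ymon s ` S \<subseteq> I" unfolding I_def by (rule pc_gens)
  have Iid: "is_ideal I" using Iperf by (simp add: is_perfect_sigma_ideal_def is_sigma_ideal_def)
  define B0 where "B0 = {b :: 'n \<Rightarrow> bool. ymon s ` S \<subseteq> Pb b}"
  have Ieq: "I = (\<Inter>b\<in>B0. Pb b)"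
  proof
    show "I \<subseteq> (\<Inter>b\<in>B0. Pb b)"
    proof (rule INT_greatest)
      fix b assume "b \<in> B0"
      then have "ymon s ` S \<subseteq> Pb b" unfolding B0_def by simp
      then show "I \<subseteq> Pb b" unfolding I_def by (rule pc_least[OF Pb_perfect[OF e]])
    qed
  next
    show "(\<Inter>b\<in>B0. Pb b) \<subseteq> I"
    proof
      fix f :: "('n,'k) dpoly" assume f: "f \<in> (\<Inter>b\<in>B0. Pb b)"
      have Xm: "X m \<in> I" if m: "m \<in> Poly_Mapping.keys f" for m
      proof -
        define bm where "bm = (\<lambda>i. i \<notin> fst ` Poly_Mapping.keys m)"
        have "bm \<notin> B0"
        proof
          assume "bm \<in> B0"
          then have "f \<in> Pb bm" using f by blast
          then have "\<forall>m\<in>Poly_Mapping.keys f. \<exists>v\<in>Poly_Mapping.keys m. bm (fst v)" by (simp add: Pb_def)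
          then obtain v where "v \<in> Poly_Mapping.keys m" "bm (fst v)" using m by blast
          then show False unfolding bm_def by blast
        qed
        then obtain u where u: "u \<in> S" "ymon s u \<notin> Pb bm" unfolding B0_def by blast
        obtain mu where mu: "ymon s u = X mu" using ymon_X[OF e] by blast
        have "\<not> (\<exists>v\<in>Poly_Mapping.keys mu. bm (fst v))" using u(2) unfolding mu by (simp add: Pb_def)
        then have "\<forall>v\<in>Poly_Mapping.keys mu. fst v \<in> fst ` Poly_Mapping.keys m" by (simp add: bm_def)
        then have sub: "fst ` Poly_Mapping.keys mu \<subseteq> fst ` Poly_Mapping.keys m" by blast
        have "ymon s u \<in> I" using Igen u(1) by blast
        then have "X mu \<in> I" unfolding mu .
        then show ?thesis using sub by (rule main_mon[OF e Iperf])
      qed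
      have "Poly_Mapping.single m (Poly_Mapping.lookup f m) \<in> I" if m: "m \<in> Poly_Mapping.keys f" for m
      proof -
        have "Poly_Mapping.single 0 (Poly_Mapping.lookup f m) * X m \<in> I"
          using Iid Xm[OF m] unfolding is_ideal_def by blast
        then show ?thesis by (simp add: mult_single)
      qed
      then have "(\<Sum>m\<in>Poly_Mapping.keys f. Poly_Mapping.single m (Poly_Mapping.lookup f m)) \<in> I"
        by (intro ideal_sum[OF Iid]) auto
      then show "f \<in> I" using pm_expand[of f] by simp
    qed
  qed
  have "finite B0" by simp
  then have part1: "\<exists>B :: ('n \<Rightarrow> bool) set. finite B \<and> I = (\<Inter>b\<in>B. pb s b)"
    using Ieq unfolding pbeq by blast
  have part2: "B1 = B2" if h: "finite B1 \<and> finite B2 \<and>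
            I = (\<Inter>b\<in>B1. pb s b) \<and> (\<forall>b\<in>B1. (\<Inter>c\<in>B1 - {b}. pb s c) \<noteq> I) \<and>
            I = (\<Inter>b\<in>B2. pb s b) \<and> (\<forall>b\<in>B2. (\<Inter>c\<in>B2 - {b}. pb s c) \<noteq> I)" for B1 B2 :: "('n \<Rightarrow> bool) set"
  proof -
    note h2 = h[unfolded pbeq]
    note a1 = h2[THEN conjunct1]
    note a2 = h2[THEN conjunct2, THEN conjunct1]
    note a3 = h2[THEN conjunct2, THEN conjunct2, THEN conjunct1]
    note a4 = h2[THEN conjunct2, THEN conjunct2, THEN conjunct2, THEN conjunct1]
    note a5 = h2[THEN conjunct2, THEN conjunct2, THEN conjunct2, THEN conjunct2, THEN conjunct1]
    note a6 = h2[THEN conjunct2, THEN conjunct2, THEN conjunct2, THEN conjunct2, THEN conjunct2]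
    have "B2 \<subseteq> B1" by (rule uniq_sub[OF a1 a2 trans[OF a3[symmetric] a5] a6[unfolded a5]])
    moreover have "B1 \<subseteq> B2" by (rule uniq_sub[OF a2 a1 trans[OF a5[symmetric] a3] a4[unfolded a3]])
    ultimately show ?thesis by (rule subset_antisym[rotated])
  qed
  show ?thesis using part1 part2 by blast
qed

end
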